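(* Let $p,q$ be positive integers, $m$ a non-negative integer and $s$ a positive integer. If there is an odd integer $a_1$ with $\frac12 G_{2^m s}=2a_1+1$, then $$\tfrac12 G_{2^{m+1}s}\equiv 1\pmod{2^{e_{g,0}}}\quad\text{and}\quad \tfrac12 G_{2^{m+1}s}\not\equiv 1\pmod{2^{e_{g,0}+1}},$$ where $e_{g,0}=3+\max\{x : 2^x\mid (a_1+1)\}$.
   Context: $A=pq+2$, $B=\sqrt{A^2-4}$, $G_n=\left(\frac{A+B}{2}\right)^n+\left(\frac{A-B}{2}\right)^n$ (an integer). *)

theory Defs
  imports Complex_Main "HOL-Number_Theory.Number_Theory" "HOL-Computational_Algebra.Computational_Algebra"
begin

definition AA :: "nat \<Rightarrow> nat \<Rightarrow> real" where
  "AA p q = real p * real q + 2"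

definition BB :: "nat \<Rightarrow> nat \<Rightarrow> real" where
  "BB p q = sqrt ((AA p q)^2 - 4)"

definition G :: "nat \<Rightarrow> nat \<Rightarrow> nat \<Rightarrow> real" where
  "G p q n = ((AA p q + BB p q) / 2) ^ n + ((AA p q - BB p q) / 2) ^ n"

end

theory Submission
  imports Defs
begin

lemma G_props:
  fixes p q n :: nat
  assumes "p > 0" "q > 0"
  shows "G p q (2*n) = (G p q n)^2 - 2" and "G p q n > 0"
proof -
  define A where "A = AA p q"
  define B where "B = BB p q"
  have A3: "A \<ge> 3"
  proof -
    have "p*q \<ge> 1" using assms by simp
    hence "real (p*q) \<ge> 1" by linarith
    thus ?thesis unfolding A_def AA_def by simp
  qed
  have B2: "B^2 = A^2 - 4"
  proof -
    have "A*A \<ge> 3*3" using A3 by (intro mult_mono) auto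
    hence "A^2 - 4 \<ge> 0" by (simp add: power2_eq_square)
    hence "(sqrt (A^2 - 4))^2 = A^2 - 4" by simp
    thus ?thesis unfolding B_def BB_def A_def by (simp only:)
  qed
  have "A^2 - 4 \<ge> 0" using A3 mult_mono[of 3 A 3 A] by (simp add: power2_eq_square)
  hence B0: "B \<ge> 0" unfolding B_def BB_def A_def by simp
  have BA: "B < A"
  proof -
    have "B^2 < A^2" using B2 by simp
    thus ?thesis using B0 A3 by (smt (verit) power_mono)
  qed
  define r1 where "r1 = (A+B)/2"
  define r2 where "r2 = (A-B)/2"
  have prod: "r1*r2 = 1" unfolding r1_def r2_def using B2
    by (simp add: field_simps power2_eq_square)
  have pos1: "r1 > 0" "r2 > 0" unfolding r1_def r2_def using B0 BA A3 by auto
  have Gd: "G p q k = r1^k + r2^k" for k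
    unfolding G_def r1_def r2_def A_def B_def by simp
  show "G p q (2*n) = (G p q n)^2 - 2"
    unfolding Gd power_mult
    by (simp add: power2_eq_square algebra_simps flip: power_mult_distrib prod)
      (simp add: prod)
  show "G p q n > 0" unfolding Gd using pos1 by (simp add: add_pos_pos)
qed

theorem lemma5:
  fixes p q m s :: nat and a1 :: int
  assumes "p > 0" "q > 0" "s > 0"
    and "odd a1"
    and "G p q (2^m * s) / 2 = 2 * of_int a1 + 1"
  shows "\<exists>c::int. of_int c = G p q (2^(m+1) * s) / 2
           \<and> [c = 1] (mod 2 ^ (3 + multiplicity 2 (a1 + 1)))
           \<and> \<not> [c = 1] (mod 2 ^ (3 + multiplicity 2 (a1 + 1) + 1))"
proof -
  define n where "n = 2^m * s"
  have e: "2^(m+1)*s = 2*n" unfolding n_def by simp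
  have Gn: "G p q n = 4 * of_int a1 + 2" using assms(5) unfolding n_def by simp
  have "G p q n > 0" using G_props(2) assms by blast
  hence "a1 \<ge> 0" using Gn by simp
  hence apos: "a1 + 1 \<noteq> 0" by simp
  define k where "k = multiplicity 2 (a1 + 1)"
  obtain u where u: "a1 + 1 = 2^k * u" "\<not> 2 dvd u"
    using multiplicity_decompose'[of "a1+1" 2] apos unfolding k_def by auto
  define c where "c = 8*a1^2 + 8*a1 + 1"
  have c1: "c - 1 = 2^(3+k) * (a1 * u)"
  proof -
    have "2^(3+k) * (a1*u) = 8*a1*(2^k*u)" by (simp add: power_add algebra_simps)
    also have "\<dots> = 8*a1*(a1+1)" using u(1) by simp
    finally show ?thesis unfolding c_def by (simp add: power2_eq_square algebra_simps)
  qed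
  have odd: "odd (a1*u)" using assms(4) u(2) by simp
  show ?thesis
  proof (intro exI conjI)
    show "of_int c = G p q (2^(m+1) * s) / 2"
      unfolding e G_props(1)[OF assms(1,2)] Gn c_def by (simp add: power2_eq_square algebra_simps)
    show "[c = 1] (mod 2 ^ (3 + multiplicity 2 (a1 + 1)))"
      unfolding k_def[symmetric] cong_iff_dvd_diff c1 by simp
    show "\<not> [c = 1] (mod 2 ^ (3 + multiplicity 2 (a1 + 1) + 1))"
      unfolding k_def[symmetric] cong_iff_dvd_diff c1
  proof
    assume "2 ^ (3 + k + 1) dvd 2 ^ (3 + k) * (a1 * u)"
    then obtain t where "2 ^ (3 + k) * (a1 * u) = 2 ^ (3 + k) * 2 * t"
      by (auto elim!: dvdE simp: power_add mult.assoc)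
    hence "a1 * u = 2 * t" by simp
    thus False using odd by simp
  qed
  qed
qed

end
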